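(* For every co-comparability graph $G$, $\operatorname{box}(G)\le 2\Delta(G)+1$, where $\Delta(G)$ is the maximum degree of $G$.
   Context: A comparability graph is a graph whose vertex set admits a partial order such that two distinct vertices are adjacent iff they are comparable; $G$ is a co-comparability graph if its complement is a comparability graph. The boxicity $\operatorname{box}(G)$ is the minimum $b$ such that $G$ is the intersection graph of axis-parallel boxes in $\mathbb{R}^b$ (products of $b$ closed intervals), one box per vertex. *)

theory Defs
  imports Complex_Main
begin

definition simple_graph :: "'a set \<Rightarrow> ('a \<Rightarrow> 'a \<Rightarrow> bool) \<Rightarrow> bool" where
  "simple_graph V E \<longleftrightarrow> finite V \<and>
     (\<forall>u v. E u v \<longrightarrow> u \<in> V \<and> v \<in> V \<and> u \<noteq> v \<and> E v u)"

definition comparability_graph :: "'a set \<Rightarrow> ('a \<Rightarrow> 'a \<Rightarrow> bool) \<Rightarrow> bool" where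
  "comparability_graph V E \<longleftrightarrow> (\<exists>r. partial_order_on V r \<and>
     (\<forall>u\<in>V. \<forall>v\<in>V. u \<noteq> v \<longrightarrow> (E u v \<longleftrightarrow> (u, v) \<in> r \<or> (v, u) \<in> r)))"

definition graph_complement :: "'a set \<Rightarrow> ('a \<Rightarrow> 'a \<Rightarrow> bool) \<Rightarrow> 'a \<Rightarrow> 'a \<Rightarrow> bool" where
  "graph_complement V E u v \<longleftrightarrow> u \<in> V \<and> v \<in> V \<and> u \<noteq> v \<and> \<not> E u v"

definition cocomparability_graph :: "'a set \<Rightarrow> ('a \<Rightarrow> 'a \<Rightarrow> bool) \<Rightarrow> bool" where
  "cocomparability_graph V E \<longleftrightarrow> comparability_graph V (graph_complement V E)"

text \<open>The axis-parallel box in R^b with lower corner lo and upper corner hi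
  (points of R^b represented as functions nat => real, only coordinates < b matter).\<close>
definition box_set :: "nat \<Rightarrow> (nat \<Rightarrow> real) \<Rightarrow> (nat \<Rightarrow> real) \<Rightarrow> (nat \<Rightarrow> real) set" where
  "box_set b lo hi = {x. \<forall>i<b. lo i \<le> x i \<and> x i \<le> hi i}"

definition box_representable :: "'a set \<Rightarrow> ('a \<Rightarrow> 'a \<Rightarrow> bool) \<Rightarrow> nat \<Rightarrow> bool" where
  "box_representable V E b \<longleftrightarrow> (\<exists>lo hi :: 'a \<Rightarrow> nat \<Rightarrow> real.
     (\<forall>v\<in>V. \<forall>i<b. lo v i \<le> hi v i) \<and>
     (\<forall>u\<in>V. \<forall>v\<in>V. u \<noteq> v \<longrightarrow>
        (E u v \<longleftrightarrow> box_set b (lo u) (hi u) \<inter> box_set b (lo v) (hi v) \<noteq> {})))"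

definition boxicity :: "'a set \<Rightarrow> ('a \<Rightarrow> 'a \<Rightarrow> bool) \<Rightarrow> nat" where
  "boxicity V E = (LEAST b. box_representable V E b)"

definition degree :: "'a set \<Rightarrow> ('a \<Rightarrow> 'a \<Rightarrow> bool) \<Rightarrow> 'a \<Rightarrow> nat" where
  "degree V E v = card {u \<in> V. E v u}"

text \<open>Maximum degree (0 for the empty graph).\<close>
definition max_degree :: "'a set \<Rightarrow> ('a \<Rightarrow> 'a \<Rightarrow> bool) \<Rightarrow> nat" where
  "max_degree V E = Max (insert 0 (degree V E ` V))"

end

theory Submission
  imports Defs
begin

lemma greedy_coloring:
  assumes fin: "finite V" and S: "S \<subseteq> V"
    and sym: "\<forall>u v. E u v \<longrightarrow> u \<noteq> v \<and> E v u"
    and deg: "\<forall>v\<in>V. card {u\<in>V. E v u} \<le> d"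
  shows "\<exists>f::'a \<Rightarrow> nat. (\<forall>v\<in>S. f v \<le> d) \<and> (\<forall>u\<in>S. \<forall>v\<in>S. E u v \<longrightarrow> f u \<noteq> f v)"
proof -
  have "finite S" using fin S finite_subset by blast
  then show ?thesis using S
  proof (induction S rule: finite_induct)
    case empty
    then show ?case by auto
  next
    case (insert x S)
    then obtain f where f1: "\<forall>v\<in>S. f v \<le> d" and f2: "\<forall>u\<in>S. \<forall>v\<in>S. E u v \<longrightarrow> f u \<noteq> f v"
      by auto
    let ?N = "{u\<in>S. E x u}"
    have xV: "x \<in> V" using insert by auto
    have "?N \<subseteq> {u\<in>V. E x u}" using insert by auto
    hence "card ?N \<le> card {u\<in>V. E x u}" using fin by (intro card_mono) auto
    moreover have "card {u\<in>V. E x u} \<le> d" using deg xV by (rule bspec)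
    ultimately have cN: "card ?N \<le> d" by linarith
    have "card (f ` ?N) \<le> card ?N" using insert by (intro card_image_le) auto
    hence "card (f ` ?N) < card {0..d}" using cN by simp
    moreover have "finite (f ` ?N)" using insert(1) by simp
    ultimately have "\<not> {0..d} \<subseteq> f ` ?N" using card_mono[of "f ` ?N" "{0..d}"] by linarith
    then obtain c where c1: "c \<le> d" and c2: "c \<notin> f ` ?N" by (meson atLeastAtMost_iff subsetI zero_le)
    define g where "g = f(x := c)"
    have "\<forall>v\<in>insert x S. g v \<le> d" using f1 c1 by (auto simp: g_def)
    moreover have "\<forall>u\<in>insert x S. \<forall>v\<in>insert x S. E u v \<longrightarrow> g u \<noteq> g v"
    proof (intro ballI impI)
      fix u v assume u: "u \<in> insert x S" and v: "v \<in> insert x S" and e: "E u v"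
      have uv: "u \<noteq> v" "E v u" using sym e by auto
      show "g u \<noteq> g v"
      proof (cases "u = x")
        case True
        then have "v \<in> S" "v \<noteq> x" using uv v by auto
        then show ?thesis using True c2 e insert(2) by (auto simp: g_def)
      next
        case False
        note F = False
        show ?thesis
        proof (cases "v = x")
          case True
          then have "u \<in> S" using F u by auto
          then show ?thesis using True F c2 uv(2) by (force simp: g_def)
        next
          case False
          then show ?thesis using F u v f2 e by (auto simp: g_def)
        qed
      qed
    qed
    ultimately show ?case by blast
  qed
qed

definition Dn :: "'a rel \<Rightarrow> 'a set \<Rightarrow> 'a \<Rightarrow> 'a set" where
  "Dn r C x = {c\<in>C. (c, x) \<in> r \<and> c \<noteq> x}"
definition Up :: "'a rel \<Rightarrow> 'a set \<Rightarrow> 'a \<Rightarrow> 'a set" where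
  "Up r C x = {c\<in>C. (x, c) \<in> r \<and> c \<noteq> x}"
definition lo :: "'a rel \<Rightarrow> 'a set \<Rightarrow> 'a \<Rightarrow> real" where
  "lo r C x = 2 * real (card (Dn r C x)) - (if x \<in> C then 0 else 1/2)"
definition hi :: "'a rel \<Rightarrow> 'a set \<Rightarrow> 'a \<Rightarrow> real" where
  "hi r C x = 2 * (real (card C) - real (card (Up r C x))) - (if x \<in> C then 1 else 1/2)"

lemma lemA:
  assumes fin: "finite C" and tr: "trans r" and an: "antisym r"
    and ny: "\<not> ((y, x) \<in> r \<and> y \<noteq> x)"
  shows "lo r C x \<le> hi r C y"
proof -
  define S where "S = (if x \<in> C then {x} else if y \<in> C then {y} else {})"
  have disj1: "Dn r C x \<inter> Up r C y = {}"
    using ny tr an unfolding Dn_def Up_def antisym_def trans_def by blast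
  have disj2: "(Dn r C x \<union> Up r C y) \<inter> S = {}"
    using ny unfolding Dn_def Up_def S_def by auto
  have sub: "Dn r C x \<union> Up r C y \<union> S \<subseteq> C" unfolding Dn_def Up_def S_def by auto
  have "card (Dn r C x \<union> Up r C y \<union> S) \<le> card C" using sub fin by (intro card_mono) auto
  moreover have "card (Dn r C x \<union> Up r C y \<union> S) = card (Dn r C x) + card (Up r C y) + card S"
    using disj1 disj2 fin finite_subset[OF sub]
    by (simp add: card_Un_disjoint)
  ultimately have "card (Dn r C x) + card (Up r C y) + card S \<le> card C" by simp
  then show ?thesis unfolding lo_def hi_def S_def by (auto split: if_splits)
qed

lemma lemB:
  assumes fin: "finite C" and tr: "trans r" and an: "antisym r"
    and ch: "\<forall>a\<in>C. \<forall>b\<in>C. (a, b) \<in> r \<or> (b, a) \<in> r"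
    and xy: "(x, y) \<in> r" "x \<noteq> y" and inC: "x \<in> C \<or> y \<in> C"
  shows "hi r C x < lo r C y"
proof -
  have "C \<subseteq> Dn r C y \<union> Up r C x"
  proof
    fix c assume c: "c \<in> C"
    show "c \<in> Dn r C y \<union> Up r C x"
      using inC
    proof
      assume xC: "x \<in> C"
      then have "(c, x) \<in> r \<or> (x, c) \<in> r" using ch c by blast
      then show ?thesis using xy tr an c unfolding Dn_def Up_def antisym_def trans_def by blast
    next
      assume yC: "y \<in> C"
      then have "(c, y) \<in> r \<or> (y, c) \<in> r" using ch c by blast
      then show ?thesis using xy tr an c unfolding Dn_def Up_def antisym_def trans_def by blast
    qed
  qed
  hence "card C \<le> card (Dn r C y \<union> Up r C x)" using fin
    by (intro card_mono) (auto simp: Dn_def Up_def)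
  also have "\<dots> \<le> card (Dn r C y) + card (Up r C x)" by (rule card_Un_le)
  finally have "card C \<le> card (Dn r C y) + card (Up r C x)" .
  then show ?thesis using inC unfolding lo_def hi_def by (auto split: if_splits)
qed

lemma box_inter:
  assumes "\<forall>i<b. lo1 i \<le> hi1 i" "\<forall>i<b. lo2 i \<le> hi2 i"
  shows "box_set b lo1 hi1 \<inter> box_set b lo2 hi2 \<noteq> {} \<longleftrightarrow>
     (\<forall>i<b. lo1 i \<le> hi2 i \<and> lo2 i \<le> hi1 i)"
proof
  assume "box_set b lo1 hi1 \<inter> box_set b lo2 hi2 \<noteq> {}"
  then obtain z where "z \<in> box_set b lo1 hi1" "z \<in> box_set b lo2 hi2" by blast
  then show "\<forall>i<b. lo1 i \<le> hi2 i \<and> lo2 i \<le> hi1 i" unfolding box_set_def by force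
next
  assume h: "\<forall>i<b. lo1 i \<le> hi2 i \<and> lo2 i \<le> hi1 i"
  have "(\<lambda>i. max (lo1 i) (lo2 i)) \<in> box_set b lo1 hi1 \<inter> box_set b lo2 hi2"
    using h assms unfolding box_set_def by auto
  then show "box_set b lo1 hi1 \<inter> box_set b lo2 hi2 \<noteq> {}" by blast
qed

theorem theorem8:
  fixes V :: "'a set" and E :: "'a \<Rightarrow> 'a \<Rightarrow> bool"
  assumes "simple_graph V E"
    and "cocomparability_graph V E"
  shows "boxicity V E \<le> 2 * max_degree V E + 1"
proof -
  let ?d = "max_degree V E"
  have fin: "finite V" and sym: "\<forall>u v. E u v \<longrightarrow> u \<noteq> v \<and> E v u"
    and EV: "\<forall>u v. E u v \<longrightarrow> u \<in> V \<and> v \<in> V"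
    using assms(1) unfolding simple_graph_def by auto
  obtain r where po: "partial_order_on V r" and
    rE: "\<forall>u\<in>V. \<forall>v\<in>V. u \<noteq> v \<longrightarrow> (graph_complement V E u v \<longleftrightarrow> (u, v) \<in> r \<or> (v, u) \<in> r)"
    using assms(2) unfolding cocomparability_graph_def comparability_graph_def by blast
  have tr: "trans r" and an: "antisym r" using po partial_order_onD by auto
  have Ecomp: "\<And>u v. u \<in> V \<Longrightarrow> v \<in> V \<Longrightarrow> u \<noteq> v \<Longrightarrow> E u v \<longleftrightarrow> \<not> ((u, v) \<in> r \<or> (v, u) \<in> r)"
    using rE unfolding graph_complement_def by blast
  have deg: "\<forall>v\<in>V. card {u\<in>V. E v u} \<le> ?d"
  proof
    fix v assume "v \<in> V"
    then have "degree V E v \<in> insert 0 (degree V E ` V)" by auto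
    then have "degree V E v \<le> ?d" unfolding max_degree_def using fin by (intro Max_ge) auto
    then show "card {u\<in>V. E v u} \<le> ?d" unfolding degree_def .
  qed
  obtain f :: "'a \<Rightarrow> nat" where f1: "\<forall>v\<in>V. f v \<le> ?d"
    and f2: "\<forall>u\<in>V. \<forall>v\<in>V. E u v \<longrightarrow> f u \<noteq> f v"
    using greedy_coloring[OF fin _ sym deg] by blast
  define C where "C i = {v\<in>V. f v = i}" for i
  have finC: "finite (C i)" for i using fin unfolding C_def by auto
  have ch: "\<forall>a\<in>C i. \<forall>b\<in>C i. (a, b) \<in> r \<or> (b, a) \<in> r" for i
  proof (intro ballI)
    fix a b assume a: "a \<in> C i" and b: "b \<in> C i"
    show "(a, b) \<in> r \<or> (b, a) \<in> r"
    proof (cases "a = b")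
      case True
      then show ?thesis using po a unfolding partial_order_on_def preorder_on_def refl_on_def C_def
        by auto
    next
      case False
      have "a \<in> V" "b \<in> V" "f a = f b" using a b unfolding C_def by auto
      then have "\<not> E a b" using f2 by (metis)
      then show ?thesis using Ecomp[of a b] False \<open>a \<in> V\<close> \<open>b \<in> V\<close> by blast
    qed
  qed
  define LO where "LO v i = lo r (C i) v" for v i
  define HI where "HI v i = hi r (C i) v" for v i
  let ?b = "?d + 1"
  have lh: "\<forall>v\<in>V. \<forall>i<?b. LO v i \<le> HI v i"
    unfolding LO_def HI_def using lemA[OF finC tr an] by auto
  have "box_representable V E ?b"
    unfolding box_representable_def
  proof (intro exI conjI)
    show "\<forall>v\<in>V. \<forall>i<?b. LO v i \<le> HI v i" by (rule lh)
    show "\<forall>u\<in>V. \<forall>v\<in>V. u \<noteq> v \<longrightarrow>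
        (E u v \<longleftrightarrow> box_set ?b (LO u) (HI u) \<inter> box_set ?b (LO v) (HI v) \<noteq> {})"
    proof (intro ballI impI)
      fix u v assume u: "u \<in> V" and v: "v \<in> V" and uv: "u \<noteq> v"
      have bi: "box_set ?b (LO u) (HI u) \<inter> box_set ?b (LO v) (HI v) \<noteq> {} \<longleftrightarrow>
          (\<forall>i<?b. LO u i \<le> HI v i \<and> LO v i \<le> HI u i)"
        using lh u v by (intro box_inter) auto
      show "E u v \<longleftrightarrow> box_set ?b (LO u) (HI u) \<inter> box_set ?b (LO v) (HI v) \<noteq> {}"
      proof
        assume "E u v"
        then have nc: "\<not> ((u, v) \<in> r \<or> (v, u) \<in> r)" using Ecomp u v uv by blast
        have "\<forall>i<?b. LO u i \<le> HI v i \<and> LO v i \<le> HI u i"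
          unfolding LO_def HI_def using lemA[OF finC tr an] nc by blast
        then show "box_set ?b (LO u) (HI u) \<inter> box_set ?b (LO v) (HI v) \<noteq> {}" using bi by blast
      next
        assume I: "box_set ?b (LO u) (HI u) \<inter> box_set ?b (LO v) (HI v) \<noteq> {}"
        show "E u v"
        proof (rule ccontr)
          assume "\<not> E u v"
          then have "(u, v) \<in> r \<or> (v, u) \<in> r" using Ecomp u v uv by blast
          then show False
          proof
            assume uvr: "(u, v) \<in> r"
            have "u \<in> C (f u)" using u unfolding C_def by auto
            then have "HI u (f u) < LO v (f u)" unfolding LO_def HI_def
              using lemB[OF finC tr an ch uvr uv] by blast
            moreover have "f u < ?b" using f1 u by auto
            ultimately show False using I bi by fastforce
          next
            assume vur: "(v, u) \<in> r"
            have "v \<in> C (f v)" using v unfolding C_def by auto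
            then have "HI v (f v) < LO u (f v)" unfolding LO_def HI_def
              using lemB[OF finC tr an ch vur] uv by blast
            moreover have "f v < ?b" using f1 v by auto
            ultimately show False using I bi by fastforce
          qed
        qed
      qed
    qed
  qed
  then have "boxicity V E \<le> ?b" unfolding boxicity_def by (rule Least_le)
  then show ?thesis by simp
qed

end
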